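(* For a barcode $f$ and any integer $p \ge 1$, $B(f^{\wedge p})$ and $D(f^{\wedge p})$ can be obtained from $C^{\wedge}(f)$: if $f, f'$ are barcodes with $C^{\wedge}(f) = C^{\wedge}(f')$, then $B(f^{\wedge p}) = B(f'^{\wedge p})$ and $D(f^{\wedge p}) = D(f'^{\wedge p})$ for all $p \ge 1$.
   Context: A barcode is a finite formal sum $f = \sum_{i=1}^n x^{\alpha_i}y^{\ell_i}$ with $n\ge0$, $\alpha_i \in \mathbb{R}$, $\ell_i \in \mathbb{R}_{>0}$ (a finite multiset of bars). Its $p$-th exterior power ($p\ge1$) is $f^{\wedge p} = \sum_{1\le i_1<\cdots<i_p\le n} x^{\alpha_{i_1}+\cdots+\alpha_{i_p}}y^{\min\{\ell_{i_1},\ldots,\ell_{i_p}\}}$ (zero if $p>n$). The birth series is $B(f) = \sum_i x^{\alpha_i}$, the death series $D(f) = \sum_i x^{\alpha_i+\ell_i}$, the critical series $C(f) = B(f) - D(f)$ (finite integer combinations of symbols $x^g$, $g\in\mathbb{R}$), and $C^{\wedge}(f) = \sum_{p\ge1} C(f^{\wedge p})z^p$ with $z$ an indeterminate. *)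

theory Defs
  imports Complex_Main "HOL-Library.Multiset"
begin

text \<open>A bar x^alpha y^l is the pair (alpha, l). A barcode is a finite list of bars
  (an enumeration of the multiset of bars) with all lengths positive.\<close>
type_synonym bar = "real \<times> real"

definition is_barcode :: "bar list \<Rightarrow> bool" where
  "is_barcode f \<longleftrightarrow> (\<forall>b\<in>set f. snd b > 0)"

definition ext_pow :: "bar list \<Rightarrow> nat \<Rightarrow> bar multiset" where
  "ext_pow f p = image_mset
     (\<lambda>S. (\<Sum>i\<in>S. fst (f ! i), Min ((\<lambda>i. snd (f ! i)) ` S)))
     (mset_set {S. S \<subseteq> {..<length f} \<and> card S = p})"

text \<open>Formal sums of symbols x^g with integer coefficients, as coefficient functions.\<close>
definition birth :: "bar multiset \<Rightarrow> real \<Rightarrow> int" where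
  "birth f g = int (size (filter_mset (\<lambda>b. fst b = g) f))"

definition death :: "bar multiset \<Rightarrow> real \<Rightarrow> int" where
  "death f g = int (size (filter_mset (\<lambda>b. fst b + snd b = g) f))"

definition crit :: "bar multiset \<Rightarrow> real \<Rightarrow> int" where
  "crit f g = birth f g - death f g"

text \<open>C^wedge(f) = sum_{p>=1} C(f^p) z^p, as coefficient function in p (0 at p = 0).\<close>
definition crit_ext :: "bar list \<Rightarrow> nat \<Rightarrow> real \<Rightarrow> int" where
  "crit_ext f p = (if 1 \<le> p then crit (ext_pow f p) else (\<lambda>_. 0))"

end

theory Submission
  imports Defs "HOL-Combinatorics.List_Permutation"
begin
definition Sets :: "nat \<Rightarrow> nat \<Rightarrow> nat set set" where
  "Sets n p = {S. S \<subseteq> {..<n} \<and> card S = p}"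
lemma finite_Sets: "finite (Sets n p)"
  unfolding Sets_def by (rule finite_subset[of _ "Pow {..<n}"]) auto
definition msums :: "real list \<Rightarrow> nat \<Rightarrow> real multiset" where
  "msums xs p = image_mset (\<lambda>S. \<Sum>i\<in>S. xs!i) (mset_set (Sets (length xs) p))"

lemma size_filter_count: "size (filter_mset (\<lambda>b. fst b = g) M) = count (image_mset fst M) g"
  by (induction M) auto

lemma fst_ext: "image_mset fst (ext_pow f p) = msums (map fst f) p"
proof -
  have "image_mset fst (ext_pow f p) = image_mset (\<lambda>S. \<Sum>i\<in>S. fst (f ! i)) (mset_set (Sets (length f) p))"
    unfolding ext_pow_def Sets_def by (simp add: multiset.map_comp o_def)
  also have "\<dots> = msums (map fst f) p"
    unfolding msums_def using finite_Sets
    by (auto intro!: image_mset_cong sum.cong simp: Sets_def dest!: subsetD)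
  finally show ?thesis .
qed

lemma birth_msums: "birth (ext_pow f p) g = int (count (msums (map fst f) p) g)"
  unfolding birth_def size_filter_count fst_ext ..

lemma msums_perm:
  assumes "mset xs = mset ys"
  shows "msums xs p = msums ys p"
proof -
  obtain h where h: "bij_betw h {..<length xs} {..<length ys}" and hx: "\<forall>i<length xs. xs ! i = ys ! (h i)"
    using permutation_Ex_bij[OF assms] by blast
  have len: "length xs = length ys" using assms mset_eq_length by blast
  let ?n = "length ys"
  have inj: "inj_on h {..<?n}" using h len bij_betw_def by auto
  have img: "h ` {..<?n} = {..<?n}" using h len by (simp add: bij_betw_def)
  have "msums xs p = image_mset (\<lambda>S. \<Sum>i\<in>S. ys ! (h i)) (mset_set (Sets ?n p))"
    unfolding msums_def len[symmetric] using finite_Sets hx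
    by (auto intro!: image_mset_cong sum.cong simp: Sets_def dest!: subsetD)
  also have "\<dots> = image_mset (\<lambda>S. \<Sum>j\<in>h ` S. ys ! j) (mset_set (Sets ?n p))"
    using finite_Sets inj
    by (auto intro!: image_mset_cong simp: Sets_def sum.reindex inj_on_subset)
  also have "\<dots> = image_mset (\<lambda>T. \<Sum>j\<in>T. ys ! j) (image_mset (image h) (mset_set (Sets ?n p)))"
    by (simp add: multiset.map_comp o_def)
  also have "image_mset (image h) (mset_set (Sets ?n p)) = mset_set (image h ` Sets ?n p)"
  proof (rule image_mset_mset_set)
    show "inj_on (image h) (Sets ?n p)"
      using inj unfolding Sets_def by (auto intro!: inj_onI dest: inj_on_image_eq_iff)
  qed
  also have "image h ` Sets ?n p = Sets ?n p"
  proof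
    show "image h ` Sets ?n p \<subseteq> Sets ?n p"
      using img inj unfolding Sets_def by (auto simp: card_image inj_on_subset)
    show "Sets ?n p \<subseteq> image h ` Sets ?n p"
    proof
      fix T assume T: "T \<in> Sets ?n p"
      define S where "S = inv_into {..<?n} h ` T"
      have "h ` S = T" using T img unfolding S_def Sets_def
        by (auto simp: f_inv_into_f image_image) (metis f_inv_into_f imageI subsetD)
      moreover have "S \<subseteq> {..<?n}" using T img unfolding S_def Sets_def
        by (auto) (metis inv_into_into lessThan_iff subsetD)
      moreover then have "card S = p" using T \<open>h ` S = T\<close> inj unfolding Sets_def
        by (metis (mono_tags, lifting) card_image mem_Collect_eq inj_on_subset)
      ultimately show "T \<in> image h ` Sets ?n p" unfolding Sets_def by blast
    qed
  qed
  finally show ?thesis unfolding msums_def by simp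
qed

lemma strict_idx: "sorted_wrt (<) (l::nat list) \<Longrightarrow> k < length l \<Longrightarrow> k \<le> l!k"
proof (induction k)
  case 0 then show ?case by simp
next
  case (Suc k)
  then have "l!k < l!Suc k" using sorted_wrt_nth_less by fastforce
  with Suc show ?case by simp
qed

lemma sorted_min:
  fixes xs :: "real list"
  assumes "sorted xs" "S \<subseteq> {..<length xs}" "card S = p"
  shows "sum_list (take p xs) \<le> (\<Sum>i\<in>S. xs!i)"
proof -
  define l where "l = sorted_list_of_set S"
  have fin: "finite S" using assms(2) finite_subset by blast
  have sl: "sorted_wrt (<) l" "set l = S" "distinct l" "length l = p"
    using fin assms(3) unfolding l_def by auto
  have pn: "p \<le> length xs" using assms card_mono[of "{..<length xs}" S] by auto
  have "(\<Sum>i\<in>S. xs!i) = sum_list (map (\<lambda>i. xs!i) l)"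
    using sl by (simp add: sum_list_distinct_conv_sum_set)
  also have "\<dots> = (\<Sum>k<p. xs!(l!k))"
    by (simp add: sum_list_sum_nth sl(4) atLeast0LessThan)
  finally have e1: "(\<Sum>i\<in>S. xs!i) = (\<Sum>k<p. xs!(l!k))" .
  have e2: "sum_list (take p xs) = (\<Sum>k<p. xs!k)"
    using pn by (simp add: sum_list_sum_nth atLeast0LessThan min_def)
  have pw: "xs!k \<le> xs!(l!k)" if k: "k \<in> {..<p}" for k
  proof -
    from k have "l!k \<in> S" using sl nth_mem by fastforce
    then have "l!k < length xs" using assms(2) by auto
    moreover have "k \<le> l!k" using strict_idx[OF sl(1)] k sl(4) by auto
    ultimately show "xs!k \<le> xs!(l!k)" using assms(1) sorted_nth_mono by blast
  qed
  have "(\<Sum>k<p. xs!k) \<le> (\<Sum>k<p. xs!(l!k))" using pw by (rule sum_mono)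
  then show ?thesis using e1 e2 by simp
qed

lemma Min_msums_sorted:
  assumes "sorted xs" "p \<le> length xs"
  shows "Min (set_mset (msums xs p)) = sum_list (take p xs)"
proof (rule Min_eqI)
  show "finite (set_mset (msums xs p))" by simp
  show "\<And>y. y \<in> set_mset (msums xs p) \<Longrightarrow> sum_list (take p xs) \<le> y"
    using assms finite_Sets unfolding msums_def Sets_def by (auto intro: sorted_min)
  have "{..<p} \<in> Sets (length xs) p" using assms unfolding Sets_def by auto
  moreover have "(\<Sum>i\<in>{..<p}. xs!i) = sum_list (take p xs)"
    using assms by (simp add: sum_list_sum_nth atLeast0LessThan min_def)
  ultimately show "sum_list (take p xs) \<in> set_mset (msums xs p)"
    unfolding msums_def using finite_Sets by (metis image_eqI set_image_mset finite_set_mset_mset_set)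
qed

lemma Sets_empty:
  assumes "n < p" shows "Sets n p = {}"
proof -
  have "card S \<le> n" if "S \<subseteq> {..<n}" for S
    using card_mono[of "{..<n}" S] that by simp
  then show ?thesis using assms unfolding Sets_def by (metis (mono_tags, lifting) empty_Collect_eq not_le)
qed

lemma Sets_ne: "p \<le> n \<Longrightarrow> {..<p} \<in> Sets n p"
  unfolding Sets_def by auto

lemma ext_pow_empty: "ext_pow f p = {#}" if "length f < p"
proof -
  have eq: "{S. S \<subseteq> {..<length f} \<and> card S = p} = {}"
    using Sets_empty[of "length f" p] that unfolding Sets_def by simp
  show ?thesis unfolding ext_pow_def eq by simp
qed

lemma mem_ext_pow:
  assumes "b \<in># ext_pow f p"
  obtains S where "S \<in> Sets (length f) p" "b = (\<Sum>i\<in>S. fst (f ! i), Min ((\<lambda>i. snd (f ! i)) ` S))"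
proof -
  have "b \<in> (\<lambda>S. (\<Sum>i\<in>S. fst (f ! i), Min ((\<lambda>i. snd (f ! i)) ` S))) ` Sets (length f) p"
    using assms finite_Sets[of "length f" p] unfolding ext_pow_def Sets_def[symmetric]
    by (simp only: set_image_mset finite_set_mset_mset_set)
  then show ?thesis using that by blast
qed

lemma snd_pos:
  assumes "is_barcode f" "1 \<le> p" "b \<in># ext_pow f p"
  shows "snd b > 0"
proof -
  obtain S where S: "S \<in> Sets (length f) p" "b = (\<Sum>i\<in>S. fst (f ! i), Min ((\<lambda>i. snd (f ! i)) ` S))"
    using mem_ext_pow[OF assms(3)] by blast
  have fin: "finite S" using S(1) unfolding Sets_def using finite_subset by blast
  have ne: "S \<noteq> {}" using S(1) assms(2) unfolding Sets_def by auto
  have "\<forall>i\<in>S. snd (f ! i) > 0" using S(1) assms(1) unfolding Sets_def is_barcode_def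
    by (auto dest!: subsetD)
  then show ?thesis using S(2) fin ne by (simp add: Min_gr_iff)
qed

lemma fst_mem:
  assumes "b \<in># ext_pow f p"
  shows "fst b \<in># msums (map fst f) p"
  using assms fst_ext[of f p] by (metis image_eqI set_image_mset)

lemma crit_min:
  assumes "is_barcode f" "1 \<le> p" "p \<le> length f"
  defines "m \<equiv> Min (set_mset (msums (map fst f) p))"
  shows "crit (ext_pow f p) m > 0" and "\<And>g. g < m \<Longrightarrow> crit (ext_pow f p) g = 0"
proof -
  have ne: "msums (map fst f) p \<noteq> {#}"
    using Sets_ne[OF assms(3)] finite_Sets unfolding msums_def by (auto simp: mset_set_empty_iff)
  have mm: "m \<in># msums (map fst f) p" unfolding m_def using ne by simp
  have ge: "m \<le> y" if "y \<in># msums (map fst f) p" for y unfolding m_def using that by simp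
  have d0: "death (ext_pow f p) g = 0" if "g \<le> m" for g
  proof -
    have "filter_mset (\<lambda>b. fst b + snd b = g) (ext_pow f p) = {#}"
    proof (rule filter_mset_eq_mempty_iff[THEN iffD2], intro allI impI)
      fix b assume b: "b \<in># ext_pow f p"
      have "snd b > 0" using snd_pos[OF assms(1,2) b] .
      moreover have "m \<le> fst b" using ge fst_mem[OF b] by blast
      ultimately show "\<not> fst b + snd b = g" using that by linarith
    qed
    then show ?thesis unfolding death_def by simp
  qed
  show "crit (ext_pow f p) m > 0"
    unfolding crit_def using d0[of m] mm by (simp add: birth_msums)
  fix g assume g: "g < m"
  have "\<not> g \<in># msums (map fst f) p" using ge g by force
  then show "crit (ext_pow f p) g = 0"
    unfolding crit_def using d0[of g] g by (simp add: birth_msums count_eq_zero_iff)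
qed

theorem proposition13:
  fixes f f' :: "bar list" and p :: nat
  assumes "is_barcode f" and "is_barcode f'"
    and "crit_ext f = crit_ext f'"
    and "1 \<le> p"
  shows "birth (ext_pow f p) = birth (ext_pow f' p) \<and> death (ext_pow f p) = death (ext_pow f' p)"
proof -
  have ce: "crit (ext_pow f q) = crit (ext_pow f' q)" if "1 \<le> q" for q
    using fun_cong[OF assms(3), of q] that unfolding crit_ext_def by simp
  have lenle: "length g' \<le> length g" if
    bg: "is_barcode g'" and cg: "\<And>q. 1 \<le> q \<Longrightarrow> crit (ext_pow g q) = crit (ext_pow g' q)" for g g'
  proof (rule ccontr)
    assume "\<not> ?thesis"
    then have lt: "length g < length g'" by simp
    let ?q = "length g'"
    have q1: "1 \<le> ?q" using lt by simp
    have "crit (ext_pow g ?q) = crit {#}" using ext_pow_empty[OF lt] by simp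
    moreover have "crit {#} x = 0" for x unfolding crit_def birth_def death_def by simp
    ultimately show False using crit_min(1)[OF bg q1 le_refl] cg[OF q1] by simp
  qed
  have len: "length f = length f'"
  proof -
    have "length f' \<le> length f" using lenle[OF assms(2) ce] .
    moreover have "length f \<le> length f'"
      by (rule lenle[where g=f' and g'=f, OF assms(1)]) (simp add: ce)
    ultimately show ?thesis by simp
  qed
  have meq: "Min (set_mset (msums (map fst f) q)) = Min (set_mset (msums (map fst f') q))"
    if q: "1 \<le> q" "q \<le> length f" for q
  proof -
    let ?m = "Min (set_mset (msums (map fst f) q))" and ?m' = "Min (set_mset (msums (map fst f') q))"
    have q': "q \<le> length f'" using q len by simp
    show ?thesis
    proof (rule ccontr)
      assume "?m \<noteq> ?m'"
      then consider "?m < ?m'" | "?m' < ?m" by linarith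
      then show False
      proof cases
        case 1
        then show False using crit_min(1)[OF assms(1) q] crit_min(2)[OF assms(2) q(1) q' 1] ce[OF q(1)] by simp
      next
        case 2
        then show False using crit_min(1)[OF assms(2) q(1) q'] crit_min(2)[OF assms(1) q 2] ce[OF q(1)] by simp
      qed
    qed
  qed
  define xs where "xs = sort (map fst f)"
  define ys where "ys = sort (map fst f')"
  have lxy: "length xs = length ys" unfolding xs_def ys_def using len by simp
  have st: "sum_list (take q xs) = sum_list (take q ys)" if "q \<le> length xs" for q
  proof (cases "q = 0")
    case True then show ?thesis by simp
  next
    case False
    then have q: "1 \<le> q" "q \<le> length f" using that unfolding xs_def by auto
    have "sum_list (take q xs) = Min (set_mset (msums xs q))"
      using Min_msums_sorted[of xs q] that unfolding xs_def by simp
    also have "\<dots> = Min (set_mset (msums (map fst f) q))"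
      unfolding xs_def by (simp add: msums_perm[of "sort (map fst f)" "map fst f"])
    also have "\<dots> = Min (set_mset (msums (map fst f') q))" using meq[OF q] .
    also have "\<dots> = Min (set_mset (msums ys q))"
      unfolding ys_def by (simp add: msums_perm[of "map fst f'" "sort (map fst f')"])
    also have "\<dots> = sum_list (take q ys)"
      using Min_msums_sorted[of ys q] that lxy unfolding ys_def by simp
    finally show ?thesis .
  qed
  have "xs = ys"
  proof (rule nth_equalityI[OF lxy])
    fix k assume k: "k < length xs"
    have "sum_list (take (Suc k) xs) = sum_list (take k xs) + xs ! k"
      using k by (simp add: take_Suc_conv_app_nth)
    moreover have "sum_list (take (Suc k) ys) = sum_list (take k ys) + ys ! k"
      using k lxy by (simp add: take_Suc_conv_app_nth)
    ultimately show "xs ! k = ys ! k" using st[of k] st[of "Suc k"] k by simp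
  qed
  then have "mset (map fst f) = mset (map fst f')"
    unfolding xs_def ys_def by (metis mset_sort)
  then have ms: "msums (map fst f) p = msums (map fst f') p" by (rule msums_perm)
  have b: "birth (ext_pow f p) = birth (ext_pow f' p)"
    by (rule ext) (simp add: birth_msums ms)
  have "death (ext_pow f p) = death (ext_pow f' p)"
  proof
    fix g
    have "death (ext_pow f p) g = birth (ext_pow f p) g - crit (ext_pow f p) g"
      unfolding crit_def by simp
    also have "\<dots> = birth (ext_pow f' p) g - crit (ext_pow f' p) g"
      using b ce[OF assms(4)] by simp
    also have "\<dots> = death (ext_pow f' p) g" unfolding crit_def by simp
    finally show "death (ext_pow f p) g = death (ext_pow f' p) g" .
  qed
  with b show ?thesis by simp
qed
end
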